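(* Let $p\ge0$ be an integer and $0<x<2\pi$. Then $$\sum_{k=1}^\infty\frac{\cos(kx)}{(2k-1)(2k)^p(2k+1)}=\begin{cases}\dfrac12-\dfrac{\pi}{4}\sin\dfrac x2-\displaystyle\sum_{j=1}^{p/2}\frac{\mathrm{Gl}_{2j}(x)}{2^{2j}}, & p\text{ even},\\[8pt] -\dfrac12-\dfrac12\cos\dfrac x2\,\ln\Big(\tan\dfrac x4\Big)+\dfrac12\ln\Big(2\sin\dfrac x2\Big)-\displaystyle\sum_{j=1}^{(p-1)/2}\frac{\mathrm{Cl}_{2j+1}(x)}{2^{2j+1}}, & p\text{ odd},\end{cases}$$ and $$\sum_{k=1}^\infty\frac{\sin(kx)}{(2k-1)(2k)^p(2k+1)}=\begin{cases}-\dfrac12\sin\dfrac x2\,\ln\Big(\tan\dfrac x4\Big)-\displaystyle\sum_{j=1}^{p/2}\frac{\mathrm{Cl}_{2j}(x)}{2^{2j}}, & p\text{ even},\\[8pt] \dfrac{\pi}{4}\cos\dfrac x2-\dfrac14(\pi-x)-\displaystyle\sum_{j=1}^{(p-1)/2}\frac{\mathrm{Gl}_{2j+1}(x)}{2^{2j+1}}, & p\text{ odd},\end{cases}$$ with empty sums equal to $0$.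
   Context: For integers $n\ge1$ the Clausen functions are $\mathrm{Cl}_{2n}(x)=\sum_{k\ge1}\frac{\sin(kx)}{k^{2n}}$, $\mathrm{Cl}_{2n+1}(x)=\sum_{k\ge1}\frac{\cos(kx)}{k^{2n+1}}$, $\mathrm{Gl}_{2n}(x)=\sum_{k\ge1}\frac{\cos(kx)}{k^{2n}}$, $\mathrm{Gl}_{2n+1}(x)=\sum_{k\ge1}\frac{\sin(kx)}{k^{2n+1}}$; equivalently $\operatorname{Li}_{2n}(e^{ix})=\mathrm{Gl}_{2n}(x)+i\,\mathrm{Cl}_{2n}(x)$ and $\operatorname{Li}_{2n+1}(e^{ix})=\mathrm{Cl}_{2n+1}(x)+i\,\mathrm{Gl}_{2n+1}(x)$. *)

theory Defs
  imports "HOL-Analysis.Analysis"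
begin

definition Cl :: "nat \<Rightarrow> real \<Rightarrow> real" where
  "Cl m x = (if even m
     then (\<Sum>k. sin (real (Suc k) * x) / real (Suc k) ^ m)
     else (\<Sum>k. cos (real (Suc k) * x) / real (Suc k) ^ m))"

definition Gl :: "nat \<Rightarrow> real \<Rightarrow> real" where
  "Gl m x = (if even m
     then (\<Sum>k. cos (real (Suc k) * x) / real (Suc k) ^ m)
     else (\<Sum>k. sin (real (Suc k) * x) / real (Suc k) ^ m))"

end

theory Submission
  imports Defs
begin

lemma log_series_bound:
  fixes z :: complex
  assumes nz: "norm z = 1" and z1: "z \<noteq> 1"
  shows "norm (- Ln (1 - z) - (\<Sum>k<n. z ^ Suc k / of_nat (Suc k))) \<le> 2 / ((1 - Re z) * real (Suc n))"
proof -
  define a where "a = Re z"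
  have a1: "a < 1"
  proof -
    have "a \<le> 1" using complex_Re_le_cmod[of z] nz a_def by simp
    moreover have "a \<noteq> 1"
    proof
      assume "a = 1"
      have "(Re z)^2 + (Im z)^2 = 1" using nz cmod_power2[of z] by simp
      then have "Im z = 0" using \<open>a = 1\<close> a_def by simp
      then show False using z1 \<open>a = 1\<close> a_def complex_eq_iff by auto
    qed
    ultimately show ?thesis by simp
  qed
  define c where "c = (1 - a) / 2"
  have c0: "c > 0" using a1 c_def by simp
  have ca: "a \<ge> -1" using abs_Re_le_cmod[of z] nz a_def by auto
  have Rebound: "Re (1 - of_real t * z) \<ge> c" if "t \<in> {0..1}" for t
  proof -
    have "Re (1 - of_real t * z) = 1 - t * a" by (simp add: a_def)
    moreover have "1 - t * a \<ge> c"
    proof (cases "a \<ge> 0")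
      case True then have "t * a \<le> a" using that by (simp add: mult_left_le_one_le)
      then show ?thesis using c_def a1 by simp
    next
      case False then have "t * a \<le> 0" using that by (simp add: mult_nonneg_nonpos)
      then show ?thesis using c_def ca by simp
    qed
    ultimately show ?thesis by linarith
  qed
  define h where "h u = - Ln (1 - u) - (\<Sum>k<n. u ^ Suc k / of_nat (Suc k))" for u :: complex
  have hder: "(h has_field_derivative ((of_real t * z) ^ n / (1 - of_real t * z))) (at (of_real t * z))"
    if t: "t \<in> {0..1}" for t
  proof -
    define u where "u = of_real t * z"
    have Re0: "Re (1 - u) > 0" using Rebound[OF t] c0 u_def by simp
    then have slit: "1 - u \<notin> \<real>\<^sub>\<le>\<^sub>0" using complex_nonpos_Reals_iff not_le by metis
    have nz1: "1 - u \<noteq> 0" using Re0 by auto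
    have u1: "u \<noteq> 1" using nz1 by simp
    have "(h has_field_derivative (inverse (1 - u) - (\<Sum>k<n. u ^ k))) (at u)"
    proof -
      have lnd: "((\<lambda>v. Ln (1 - v)) has_field_derivative (inverse (1 - u) * (- 1))) (at u)"
        by (rule DERIV_chain2[where g="\<lambda>v. 1 - v" and x=u, OF has_field_derivative_Ln[OF slit]]) (auto intro!: derivative_eq_intros)
      have sd: "((\<lambda>v. \<Sum>k<n. v ^ Suc k / of_nat (Suc k)) has_field_derivative (\<Sum>k<n. u ^ k)) (at u)"
      proof (rule DERIV_sum)
        fix k assume "k \<in> {..<n}"
        have "((\<lambda>v. v ^ Suc k) has_field_derivative (1 + of_nat k) * (1 * u ^ k)) (at u)"
          by (rule DERIV_power_Suc) (rule DERIV_ident)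
        from DERIV_cdivide[OF this, of "of_nat (Suc k)"]
        have d: "((\<lambda>v. v ^ Suc k / of_nat (Suc k)) has_field_derivative (1 + of_nat k) * (1 * u ^ k) / of_nat (Suc k)) (at u)" .
        have eq: "(1 + of_nat k) * (1 * u ^ k) / of_nat (Suc k) = (u ^ k :: complex)"
        proof -
          have "(of_nat (Suc k) :: complex) \<noteq> 0" by (simp only: of_nat_eq_0_iff)
          then show ?thesis by (simp add: add.commute)
        qed
        show "((\<lambda>v. v ^ Suc k / of_nat (Suc k)) has_field_derivative u ^ k) (at u)"
          using d unfolding eq .
      qed
      show ?thesis unfolding h_def[abs_def]
        using DERIV_diff[OF DERIV_minus[OF lnd] sd] by simp
    qed
    moreover have "inverse (1 - u) - (\<Sum>k<n. u ^ k) = u ^ n / (1 - u)"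
      using u1 nz1 by (simp add: sum_gp_strict field_simps)
    ultimately show ?thesis unfolding u_def by simp
  qed
  define g where "g t = z * ((of_real t * z) ^ n / (1 - of_real t * z))" for t :: real
  have gint: "(g has_integral (h z - h 0)) {0..1}"
  proof -
    have "(g has_integral (h (of_real 1 * z) - h (of_real 0 * z))) {0..1}"
    proof (rule fundamental_theorem_of_calculus)
      fix t :: real assume t: "t \<in> {0..1}"
      have fd: "((\<lambda>t. of_real t * z) has_vector_derivative z) (at t)"
        by (auto intro!: derivative_eq_intros simp: has_vector_derivative_def scaleR_conv_of_real)
      from field_vector_diff_chain_at[OF fd hder[OF t]]
      show "((\<lambda>t. h (of_real t * z)) has_vector_derivative g t) (at t within {0..1})"
        unfolding g_def o_def by (rule has_vector_derivative_at_within)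
    qed simp
    then show ?thesis by simp
  qed
  have h0: "h 0 = 0" unfolding h_def by simp
  have pint: "((\<lambda>t. t ^ n / c) has_integral (1 / (c * real (Suc n)))) {0..1}"
  proof -
    have "((\<lambda>t. t ^ n / c) has_integral ((\<lambda>t. t ^ Suc n / (c * real (Suc n))) 1 - (\<lambda>t. t ^ Suc n / (c * real (Suc n))) 0)) {0..1}"
    proof (rule fundamental_theorem_of_calculus)
      fix t :: real assume t: "t \<in> {0..1}"
      have "((\<lambda>t. t ^ Suc n) has_real_derivative (1 + real n) * (1 * t ^ n)) (at t within {0..1})"
        by (rule DERIV_power_Suc, rule DERIV_ident)
      from DERIV_cdivide[OF this, of "c * real (Suc n)"]
      have d: "((\<lambda>t. t ^ Suc n / (c * real (Suc n))) has_real_derivative (1 + real n) * (1 * t ^ n) / (c * real (Suc n))) (at t within {0..1})" .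
      have eq: "(1 + real n) * (1 * t ^ n) / (c * real (Suc n)) = t ^ n / c"
      proof -
        have e: "real (Suc n) = 1 + real n" by simp
        have p: "1 + real n > 0" by simp
        have "(1 + real n) * (1 * t ^ n) / (c * (1 + real n)) = t ^ n / c"
          using c0 p by (simp add: divide_simps)
        then show ?thesis unfolding e .
      qed
      have "((\<lambda>t. t ^ Suc n / (c * real (Suc n))) has_real_derivative (t ^ n / c)) (at t within {0..1})"
        using d unfolding eq .
      then show "((\<lambda>t. t ^ Suc n / (c * real (Suc n))) has_vector_derivative (t ^ n / c)) (at t within {0..1})"
        by (simp add: has_real_derivative_iff_has_vector_derivative)
    qed simp
    then show ?thesis by simp
  qed
  have gle: "norm (g t) \<le> t ^ n / c" if t: "t \<in> {0..1}" for t
  proof -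
    have "norm (1 - of_real t * z) \<ge> c"
      using Rebound[OF t] complex_Re_le_cmod[of "1 - of_real t * z"] by linarith
    then have "norm (g t) = t ^ n / norm (1 - of_real t * z)"
      using t c0 by (simp add: g_def norm_mult norm_divide norm_power nz)
    also have "\<dots> \<le> t ^ n / c"
      using \<open>norm (1 - of_real t * z) \<ge> c\<close> c0 t by (intro divide_left_mono) (auto intro!: mult_pos_pos)
    finally show ?thesis .
  qed
  have "norm (h z) \<le> 1 / (c * real (Suc n))"
    using integral_norm_bound_integral[OF has_integral_integrable[OF gint] has_integral_integrable[OF pint] gle]
    using integral_unique[OF gint] integral_unique[OF pint] h0 by simp
  then show ?thesis unfolding h_def c_def a_def by simp
qed

lemma log_series:
  fixes z :: complex
  assumes nz: "norm z = 1" and z1: "z \<noteq> 1"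
  shows "(\<lambda>n. z ^ Suc n / of_nat (Suc n)) sums (- Ln (1 - z))"
proof -
  have a1: "Re z < 1"
  proof -
    have "Re z \<le> 1" using complex_Re_le_cmod[of z] nz by simp
    moreover have "Re z \<noteq> 1"
    proof
      assume a: "Re z = 1"
      have "(Re z)^2 + (Im z)^2 = 1" using nz cmod_power2[of z] by simp
      then have "Im z = 0" using a by simp
      then show False using z1 a complex_eq_iff by auto
    qed
    ultimately show ?thesis by simp
  qed
  have lim: "(\<lambda>n. (2 / (1 - Re z)) * inverse (real (Suc n))) \<longlonglongrightarrow> 0"
    by (rule tendsto_mult_right_zero) (rule LIMSEQ_inverse_real_of_nat)
  have "(\<lambda>n. (\<Sum>k<n. z ^ Suc k / of_nat (Suc k)) - (- Ln (1 - z))) \<longlonglongrightarrow> 0"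
  proof (rule Lim_null_comparison[OF _ lim], rule always_eventually, rule allI)
    fix n
    have "norm ((\<Sum>k<n. z ^ Suc k / of_nat (Suc k)) - (- Ln (1 - z))) = norm (- Ln (1 - z) - (\<Sum>k<n. z ^ Suc k / of_nat (Suc k)))"
      by (rule norm_minus_commute)
    also have "\<dots> \<le> 2 / ((1 - Re z) * real (Suc n))" by (rule log_series_bound[OF nz z1])
    also have "\<dots> = (2 / (1 - Re z)) * inverse (real (Suc n))" by (simp add: field_simps)
    finally show "norm ((\<Sum>k<n. z ^ Suc k / of_nat (Suc k)) - (- Ln (1 - z))) \<le> (2 / (1 - Re z)) * inverse (real (Suc n))" .
  qed
  then show ?thesis unfolding sums_def by (rule LIM_zero_cancel)
qed

lemma one_minus_cis:
  assumes "0 < phi" "phi < 2 * pi"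
  shows "1 - cis phi = exp (Complex (ln (2 * sin (phi / 2))) ((phi - pi) / 2))"
proof -
  have s: "sin (phi / 2) > 0" using assms by (intro sin_gt_zero) auto
  have c1: "cos ((phi - pi) / 2) = sin (phi / 2)"
  proof -
    have e: "(phi - pi) / 2 = phi / 2 - pi / 2" by (simp add: field_simps)
    show ?thesis unfolding e by (simp add: cos_diff)
  qed
  have c2: "sin ((phi - pi) / 2) = - cos (phi / 2)"
  proof -
    have e: "(phi - pi) / 2 = phi / 2 - pi / 2" by (simp add: field_simps)
    show ?thesis unfolding e by (simp add: sin_diff)
  qed
  have d1: "cos phi = 1 - 2 * (sin (phi / 2))^2"
    using cos_double_sin[of "phi/2"] by simp
  have d2: "sin phi = 2 * sin (phi / 2) * cos (phi / 2)"
    using sin_double[of "phi/2"] by simp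
  show ?thesis using s
    by (simp add: complex_eq_iff exp_eq_polar c1 c2 d1 d2 power2_eq_square)
qed

lemma Ln_one_minus_cis:
  assumes "0 < phi" "phi < 2 * pi"
  shows "Ln (1 - cis phi) = Complex (ln (2 * sin (phi / 2))) ((phi - pi) / 2)"
  unfolding one_minus_cis[OF assms] using assms by (intro Ln_exp) auto

lemma log_series_cis:
  assumes "0 < phi" "phi < 2 * pi"
  shows "(\<lambda>n. cis phi ^ Suc n / of_nat (Suc n)) sums Complex (- ln (2 * sin (phi / 2))) ((pi - phi) / 2)"
proof -
  have "cis phi \<noteq> 1"
  proof
    assume "cis phi = 1"
    then have "1 - cis phi = 0" by simp
    then show False unfolding one_minus_cis[OF assms] by simp
  qed
  from log_series[OF _ this] have "(\<lambda>n. cis phi ^ Suc n / of_nat (Suc n)) sums (- Ln (1 - cis phi))" by simp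
  also have "- Ln (1 - cis phi) = Complex (- ln (2 * sin (phi / 2))) ((pi - phi) / 2)"
    unfolding Ln_one_minus_cis[OF assms] by (simp add: complex_eq_iff field_simps)
  finally show ?thesis .
qed

lemma odd_series_cis:
  assumes "0 < th" "th < pi"
  shows "(\<lambda>m. cis th ^ (2 * m + 1) / of_nat (2 * m + 1)) sums
           Complex ((ln (2 * cos (th / 2)) - ln (2 * sin (th / 2))) / 2) (pi / 4)"
proof -
  have L1: "(\<lambda>n. cis th ^ Suc n / of_nat (Suc n)) sums Complex (- ln (2 * sin (th / 2))) ((pi - th) / 2)"
    using assms by (intro log_series_cis) auto
  have L2': "(\<lambda>n. cis (th + pi) ^ Suc n / of_nat (Suc n)) sums Complex (- ln (2 * sin ((th + pi) / 2))) ((pi - (th + pi)) / 2)"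
    using assms by (intro log_series_cis) auto
  have cpi: "cis (th + pi) = - cis th" by (simp add: cis.ctr complex_eq_iff cos_add sin_add)
  have spi: "sin ((th + pi) / 2) = cos (th / 2)"
  proof -
    have e: "(th + pi) / 2 = th / 2 + pi / 2" by (simp add: field_simps)
    show ?thesis unfolding e by (simp add: sin_add)
  qed
  have L2: "(\<lambda>n. (- cis th) ^ Suc n / of_nat (Suc n)) sums Complex (- ln (2 * cos (th / 2))) (- th / 2)"
    using L2' unfolding cpi spi by (simp add: field_simps)
  define f where "f n = cis th ^ Suc n / of_nat (Suc n) - (- cis th) ^ Suc n / of_nat (Suc n)" for n
  have Lf: "f sums (Complex (- ln (2 * sin (th / 2))) ((pi - th) / 2) - Complex (- ln (2 * cos (th / 2))) (- th / 2))"
    unfolding f_def by (rule sums_diff[OF L1 L2])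
  from sums_group[OF Lf, of 2]
  have G: "(\<lambda>m. sum f {m * 2..<m * 2 + 2}) sums (Complex (- ln (2 * sin (th / 2))) ((pi - th) / 2) - Complex (- ln (2 * cos (th / 2))) (- th / 2))"
    by simp
  have geq: "sum f {m * 2..<m * 2 + 2} = 2 * (cis th ^ (2 * m + 1) / of_nat (2 * m + 1))" for m
  proof -
    have "sum f {m * 2..<m * 2 + 2} = f (2 * m) + f (2 * m + 1)"
      by (simp add: numeral_2_eq_2 mult.commute)
    also have "f (2 * m) = 2 * (cis th ^ (2 * m + 1) / of_nat (2 * m + 1))"
      unfolding f_def by (simp add: power_minus_odd)
    also have "f (2 * m + 1) = 0"
      unfolding f_def by (simp add: power_minus_even)
    finally show ?thesis by simp
  qed
  have e2: "\<And>y::complex. 2 * y / 2 = y" by simp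
  from sums_divide[OF G[unfolded geq], of 2, unfolded e2]
  have "(\<lambda>m. cis th ^ (2 * m + 1) / of_nat (2 * m + 1)) sums
     ((Complex (- ln (2 * sin (th / 2))) ((pi - th) / 2) - Complex (- ln (2 * cos (th / 2))) (- th / 2)) / 2)"
    by simp
  also have "(Complex (- ln (2 * sin (th / 2))) ((pi - th) / 2) - Complex (- ln (2 * cos (th / 2))) (- th / 2)) / 2
     = Complex ((ln (2 * cos (th / 2)) - ln (2 * sin (th / 2))) / 2) (pi / 4)"
    by (simp add: complex_eq_iff field_simps)
  finally show ?thesis .
qed

lemma series_E:
  assumes x0: "0 < x" and x2: "x < 2 * pi"
  defines "VA \<equiv> Complex ((ln (2 * cos (x / 4)) - ln (2 * sin (x / 4))) / 2) (pi / 4)"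
  shows "(\<lambda>m. cis (real (Suc m) * x) * of_real (1 / (2 * real (Suc m) - 1))) sums (cis (x/2) * VA)"
    and "(\<lambda>m. cis (real (Suc m) * x) * of_real (1 / (2 * real (Suc m) + 1))) sums ((VA - cis (x/2)) * cis (- x/2))"
    and "(\<lambda>m. cis (real (Suc m) * x) * of_real (1 / real (Suc m))) sums Complex (- ln (2 * sin (x / 2))) ((pi - x) / 2)"
proof -
  define th where "th = x / 2"
  have th0: "0 < th" "th < pi" using x0 x2 th_def by auto
  have A: "(\<lambda>m. cis th ^ (2 * m + 1) / of_nat (2 * m + 1)) sums VA"
  proof -
    have th2: "th / 2 = x / 4" by (simp add: th_def)
    show ?thesis using odd_series_cis[OF th0] unfolding VA_def th2 .
  qed
  have powc: "cis th ^ n = cis (real n * th)" for n by (rule Complex.DeMoivre)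
  have A': "(\<lambda>m. cis (real (2 * m + 1) * th) * of_real (1 / real (2 * m + 1))) sums VA"
  proof -
    have E: "cis th ^ (2 * m + 1) / of_nat (2 * m + 1) = cis (real (2 * m + 1) * th) * of_real (1 / real (2 * m + 1))" for m
      unfolding powc by (simp add: divide_inverse)
    show ?thesis using A unfolding E .
  qed
  show "(\<lambda>m. cis (real (Suc m) * x) * of_real (1 / (2 * real (Suc m) - 1))) sums (cis (x/2) * VA)"
  proof -
    from sums_mult[OF A', of "cis th"]
    have S: "(\<lambda>m. cis th * (cis (real (2 * m + 1) * th) * of_real (1 / real (2 * m + 1)))) sums (cis th * VA)" .
    have E: "cis th * (cis (real (2 * m + 1) * th) * of_real (1 / real (2 * m + 1))) =
       cis (real (Suc m) * x) * of_real (1 / (2 * real (Suc m) - 1))" for m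
    proof -
      have e: "th + real (2 * m + 1) * th = real (Suc m) * x" by (simp add: th_def field_simps)
      have h1: "cis th * cis (real (2 * m + 1) * th) = cis (real (Suc m) * x)"
        by (simp only: cis_mult e)
      have h2: "real (2 * m + 1) = 2 * real (Suc m) - 1" by simp
      show ?thesis unfolding mult.assoc[symmetric] h1 unfolding h2 ..
    qed
    from S[unfolded E] show ?thesis unfolding th_def .
  qed
  show "(\<lambda>m. cis (real (Suc m) * x) * of_real (1 / (2 * real (Suc m) + 1))) sums ((VA - cis (x/2)) * cis (- x/2))"
  proof -
    define F where "F m = cis (real (2 * m + 1) * th) * of_real (1 / real (2 * m + 1))" for m
    have F0: "F 0 = cis th" unfolding F_def by simp
    have "(\<lambda>m. F (Suc m)) sums (VA - F 0)"
      using A' sums_Suc_iff[of F "VA - F 0"] unfolding F_def[abs_def] by simp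
    then have "(\<lambda>m. cis (real (2 * Suc m + 1) * th) * of_real (1 / real (2 * Suc m + 1))) sums (VA - cis th)"
      unfolding F0 unfolding F_def .
    from sums_mult2[OF this, of "cis (- th)"]
    have S: "(\<lambda>m. cis (real (2 * Suc m + 1) * th) * of_real (1 / real (2 * Suc m + 1)) * cis (- th)) sums ((VA - cis th) * cis (- th))" .
    have E: "cis (real (2 * Suc m + 1) * th) * of_real (1 / real (2 * Suc m + 1)) * cis (- th) =
       cis (real (Suc m) * x) * of_real (1 / (2 * real (Suc m) + 1))" for m
    proof -
      have e: "real (2 * Suc m + 1) * th + - th = real (Suc m) * x" by (simp add: th_def field_simps)
      have h1: "cis (real (2 * Suc m + 1) * th) * cis (- th) = cis (real (Suc m) * x)"
        by (simp only: cis_mult e)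
      have h2: "real (2 * Suc m + 1) = 2 * real (Suc m) + 1" by simp
      have "cis (real (2 * Suc m + 1) * th) * of_real (1 / real (2 * Suc m + 1)) * cis (- th)
         = (cis (real (2 * Suc m + 1) * th) * cis (- th)) * of_real (1 / real (2 * Suc m + 1))"
        by (simp only: mult_ac)
      then show ?thesis unfolding h1 unfolding h2 .
    qed
    have cm: "cis (- th) = cis (- x / 2)" by (simp add: th_def)
    from S[unfolded E, unfolded cm] show ?thesis unfolding th_def .
  qed
  show "(\<lambda>m. cis (real (Suc m) * x) * of_real (1 / real (Suc m))) sums Complex (- ln (2 * sin (x / 2))) ((pi - x) / 2)"
  proof -
    have E: "cis x ^ Suc m / of_nat (Suc m) = cis (real (Suc m) * x) * of_real (1 / real (Suc m))" for m
      unfolding Complex.DeMoivre by (simp add: divide_inverse)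
    show ?thesis using log_series_cis[OF x0 x2] unfolding E .
  qed
qed

lemma lntan:
  assumes "0 < x" "x < 2 * pi"
  shows "(ln (2 * cos (x / 4)) - ln (2 * sin (x / 4))) / 2 = - ln (tan (x / 4)) / 2"
proof -
  have s: "sin (x / 4) > 0" using assms by (intro sin_gt_zero) auto
  have c: "cos (x / 4) > 0" using assms by (intro cos_gt_zero) auto
  show ?thesis using s c by (simp add: tan_def ln_div ln_mult)
qed

lemma lin2: "(1/2::complex) * (c * of_real a - c * of_real b) = c * of_real (1/2 * (a - b))"
  by (simp add: algebra_simps)

lemma lin3: "(1/2::complex) * (c * of_real a - c * of_real b + c * of_real d) = c * of_real (1/2 * (a - b + d))"
  by (simp add: algebra_simps)

lemma pf3:
  fixes y :: real assumes "y \<ge> 1"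
  shows "1/2 * (1 / (2 * y - 1) - 1 / y + 1 / (2 * y + 1)) = 1 / ((2 * y - 1) * (2 * y) * (2 * y + 1))"
proof -
  have a: "2 * y - 1 \<noteq> 0" "2 * y + 1 \<noteq> 0" "y \<noteq> 0" using assms by auto
  then show ?thesis by (simp add: field_simps)
qed

lemma base_complex:
  assumes x0: "0 < x" and x2: "x < 2 * pi"
  shows "(\<lambda>k. cis (real (Suc k) * x) * of_real (1 / ((2 * real (Suc k) - 1) * (2 * real (Suc k) + 1))))
           sums Complex (1/2 - pi/4 * sin (x/2)) (- 1/2 * sin (x/2) * ln (tan (x/4)))"
    and "(\<lambda>k. cis (real (Suc k) * x) * of_real (1 / ((2 * real (Suc k) - 1) * (2 * real (Suc k)) * (2 * real (Suc k) + 1))))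
           sums Complex (- 1/2 - 1/2 * cos (x/2) * ln (tan (x/4)) + 1/2 * ln (2 * sin (x/2))) (pi/4 * cos (x/2) - 1/4 * (pi - x))"
proof -
  define VA where "VA = Complex ((ln (2 * cos (x / 4)) - ln (2 * sin (x / 4))) / 2) (pi / 4)"
  have VA: "VA = Complex (- ln (tan (x / 4)) / 2) (pi / 4)" unfolding VA_def lntan[OF x0 x2] ..
  note E = series_E[OF x0 x2, folded VA_def]
  have cs: "sin (x/2) ^ 2 + cos (x/2) ^ 2 = 1" by simp
  show "(\<lambda>k. cis (real (Suc k) * x) * of_real (1 / ((2 * real (Suc k) - 1) * (2 * real (Suc k) + 1))))
           sums Complex (1/2 - pi/4 * sin (x/2)) (- 1/2 * sin (x/2) * ln (tan (x/4)))"
  proof -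
    from sums_mult[OF sums_diff[OF E(1) E(2)], of "1/2"]
    have S: "(\<lambda>k. 1/2 * (cis (real (Suc k) * x) * of_real (1 / (2 * real (Suc k) - 1)) - cis (real (Suc k) * x) * of_real (1 / (2 * real (Suc k) + 1))))
       sums (1/2 * (cis (x/2) * VA - (VA - cis (x/2)) * cis (- x/2)))" .
    have T: "1/2 * (cis (real (Suc k) * x) * of_real (1 / (2 * real (Suc k) - 1)) - cis (real (Suc k) * x) * of_real (1 / (2 * real (Suc k) + 1)))
      = cis (real (Suc k) * x) * of_real (1 / ((2 * real (Suc k) - 1) * (2 * real (Suc k) + 1)))" for k
    proof -
      have "1/2 * (1 / (2 * real (Suc k) - 1) - 1 / (2 * real (Suc k) + 1)) = 1 / ((2 * real (Suc k) - 1) * (2 * real (Suc k) + 1))"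
      proof -
        have a: "2 * real (Suc k) - 1 > 0" "2 * real (Suc k) + 1 > 0" by auto
        then show ?thesis by (simp add: field_simps)
      qed
      then show ?thesis unfolding lin2 by simp
    qed
    have V: "1/2 * (cis (x/2) * VA - (VA - cis (x/2)) * cis (- x/2)) = Complex (1/2 - pi/4 * sin (x/2)) (- 1/2 * sin (x/2) * ln (tan (x/4)))"
      unfolding VA using cs by (simp add: complex_eq_iff field_simps) (simp add: algebra_simps power2_eq_square)?
    show ?thesis using S unfolding T V .
  qed
  show "(\<lambda>k. cis (real (Suc k) * x) * of_real (1 / ((2 * real (Suc k) - 1) * (2 * real (Suc k)) * (2 * real (Suc k) + 1))))
           sums Complex (- 1/2 - 1/2 * cos (x/2) * ln (tan (x/4)) + 1/2 * ln (2 * sin (x/2))) (pi/4 * cos (x/2) - 1/4 * (pi - x))"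
  proof -
    from sums_mult[OF sums_add[OF sums_diff[OF E(1) E(3)] E(2)], of "1/2"]
    have S: "(\<lambda>k. 1/2 * (cis (real (Suc k) * x) * of_real (1 / (2 * real (Suc k) - 1)) - cis (real (Suc k) * x) * of_real (1 / real (Suc k))
          + cis (real (Suc k) * x) * of_real (1 / (2 * real (Suc k) + 1))))
       sums (1/2 * (cis (x/2) * VA - Complex (- ln (2 * sin (x / 2))) ((pi - x) / 2) + (VA - cis (x/2)) * cis (- x/2)))" .
    have T: "1/2 * (cis (real (Suc k) * x) * of_real (1 / (2 * real (Suc k) - 1)) - cis (real (Suc k) * x) * of_real (1 / real (Suc k))
          + cis (real (Suc k) * x) * of_real (1 / (2 * real (Suc k) + 1)))
      = cis (real (Suc k) * x) * of_real (1 / ((2 * real (Suc k) - 1) * (2 * real (Suc k)) * (2 * real (Suc k) + 1)))" for k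
    proof -
      have r: "1/2 * (1 / (2 * real (Suc k) - 1) - 1 / real (Suc k) + 1 / (2 * real (Suc k) + 1)) = 1 / ((2 * real (Suc k) - 1) * (2 * real (Suc k)) * (2 * real (Suc k) + 1))"
        by (rule pf3) simp
      have "1/2 * (cis (real (Suc k) * x) * of_real (1 / (2 * real (Suc k) - 1)) - cis (real (Suc k) * x) * of_real (1 / real (Suc k))
          + cis (real (Suc k) * x) * of_real (1 / (2 * real (Suc k) + 1)))
         = cis (real (Suc k) * x) * of_real (1/2 * (1 / (2 * real (Suc k) - 1) - 1 / real (Suc k) + 1 / (2 * real (Suc k) + 1)))"
        by (rule lin3)
      then show ?thesis unfolding r .
    qed
    have V: "1/2 * (cis (x/2) * VA - Complex (- ln (2 * sin (x / 2))) ((pi - x) / 2) + (VA - cis (x/2)) * cis (- x/2))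
       = Complex (- 1/2 - 1/2 * cos (x/2) * ln (tan (x/4)) + 1/2 * ln (2 * sin (x/2))) (pi/4 * cos (x/2) - 1/4 * (pi - x))"
      unfolding VA using cs by (simp add: complex_eq_iff field_simps) (simp add: algebra_simps power2_eq_square)?
    show ?thesis using S unfolding T V .
  qed
qed

lemma pf_step:
  fixes y c :: real assumes "y \<ge> 1"
  shows "c / ((2 * y - 1) * (2 * y) ^ (p + 2) * (2 * y + 1)) =
         c / ((2 * y - 1) * (2 * y) ^ p * (2 * y + 1)) - c / y ^ (p + 2) / 2 ^ (p + 2)"
proof -
  have a: "2 * y - 1 \<noteq> 0" "2 * y + 1 \<noteq> 0" "y \<noteq> 0" using assms by auto
  have e1: "(2 * y) ^ (p + 2) = (2 * y) ^ p * (4 * y^2)" by (simp add: power_add power2_eq_square)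
  have e2: "y ^ (p + 2) * 2 ^ (p + 2) = (2 * y) ^ p * (4 * y^2)" by (simp add: power_add power2_eq_square power_mult_distrib)
  have nz: "(2 * y) ^ p \<noteq> 0" using a by simp
  have ab: "(2 * y - 1) * (2 * y + 1) = 4 * y^2 - 1" by (simp add: algebra_simps power2_eq_square)
  have u: "4 * y^2 \<noteq> 0" "4 * y^2 - 1 \<noteq> 0" using a ab by auto
  have g: "c / (A * (Q * U) * B) = c / (A * Q * B) - c / (Q * U)"
    if "Q \<noteq> 0" "U \<noteq> 0" "A * B = U - 1" "U - 1 \<noteq> 0" for A B Q U :: real
  proof -
    have e1: "A * (Q * U) * B = (A * B) * (Q * U)" by (simp only: ac_simps)
    have e2: "A * Q * B = (A * B) * Q" by (simp only: ac_simps)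
    have "c / ((U - 1) * (Q * U)) = c / ((U - 1) * Q) - c / (Q * U)"
      using that(1,2,4) by (simp add: field_simps)
    then show ?thesis unfolding e1 e2 that(3) .
  qed
  show ?thesis unfolding divide_divide_eq_left e1 e2
    by (rule g[OF nz u(1) ab u(2)])
qed

lemma step:
  fixes f :: "real \<Rightarrow> real"
  assumes b: "\<And>y. \<bar>f y\<bar> \<le> 1"
    and S: "(\<lambda>k. f (real (Suc k) * x) / ((2 * real (Suc k) - 1) * (2 * real (Suc k)) ^ p * (2 * real (Suc k) + 1))) sums s"
  shows "(\<lambda>k. f (real (Suc k) * x) / ((2 * real (Suc k) - 1) * (2 * real (Suc k)) ^ (p + 2) * (2 * real (Suc k) + 1)))
           sums (s - (\<Sum>k. f (real (Suc k) * x) / real (Suc k) ^ (p + 2)) / 2 ^ (p + 2))"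
proof -
  have sm2: "summable (\<lambda>k. inverse (real (Suc k) ^ 2))"
    using inverse_power_summable[of 2, where 'a=real] summable_Suc_iff[of "\<lambda>n. inverse (real n ^ 2)"] by simp
  have "summable (\<lambda>k. f (real (Suc k) * x) / real (Suc k) ^ (p + 2))"
  proof (rule summable_comparison_test[OF _ sm2], intro exI allI impI)
    fix k :: nat
    have y1: "real (Suc k) \<ge> 1" by simp
    have "norm (f (real (Suc k) * x) / real (Suc k) ^ (p + 2)) = \<bar>f (real (Suc k) * x)\<bar> / real (Suc k) ^ (p + 2)"
      by (simp add: abs_divide)
    also have "\<dots> \<le> 1 / real (Suc k) ^ (p + 2)"
      using b by (intro divide_right_mono) auto
    also have "\<dots> \<le> 1 / real (Suc k) ^ 2"
      using y1 by (intro divide_left_mono power_increasing) auto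
    finally show "norm (f (real (Suc k) * x) / real (Suc k) ^ (p + 2)) \<le> inverse (real (Suc k) ^ 2)"
      by (simp add: divide_inverse)
  qed
  from sums_diff[OF S sums_divide[OF summable_sums[OF this], of "2 ^ (p + 2)"]]
  show ?thesis
    by (subst pf_step) auto
qed

lemma step':
  fixes f :: "real \<Rightarrow> real"
  assumes b: "\<And>y. \<bar>f y\<bar> \<le> 1"
    and S: "(\<lambda>k. f (real (Suc k) * x) / ((2 * real (Suc k) - 1) * (2 * real (Suc k)) ^ p * (2 * real (Suc k) + 1))) sums (s - T)"
    and q: "q = p + 2" and G: "G = (\<Sum>k. f (real (Suc k) * x) / real (Suc k) ^ q)"
  shows "(\<lambda>k. f (real (Suc k) * x) / ((2 * real (Suc k) - 1) * (2 * real (Suc k)) ^ q * (2 * real (Suc k) + 1)))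
           sums (s - (T + G / 2 ^ q))"
  using step[OF b S] unfolding q G by (simp add: algebra_simps)

lemma main:
  assumes x0: "0 < x" and x2: "x < 2 * pi"
  shows "(\<lambda>k. cos (real (Suc k) * x) / ((2 * real (Suc k) - 1) * (2 * real (Suc k)) ^ (2*m) * (2 * real (Suc k) + 1)))
           sums (1/2 - pi/4 * sin (x/2) - (\<Sum>j=1..m. Gl (2*j) x / 2 ^ (2*j)))
       \<and> (\<lambda>k. sin (real (Suc k) * x) / ((2 * real (Suc k) - 1) * (2 * real (Suc k)) ^ (2*m) * (2 * real (Suc k) + 1)))
           sums (- 1/2 * sin (x/2) * ln (tan (x/4)) - (\<Sum>j=1..m. Cl (2*j) x / 2 ^ (2*j)))
       \<and> (\<lambda>k. cos (real (Suc k) * x) / ((2 * real (Suc k) - 1) * (2 * real (Suc k)) ^ (2*m+1) * (2 * real (Suc k) + 1)))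
           sums (- 1/2 - 1/2 * cos (x/2) * ln (tan (x/4)) + 1/2 * ln (2 * sin (x/2)) - (\<Sum>j=1..m. Cl (2*j+1) x / 2 ^ (2*j+1)))
       \<and> (\<lambda>k. sin (real (Suc k) * x) / ((2 * real (Suc k) - 1) * (2 * real (Suc k)) ^ (2*m+1) * (2 * real (Suc k) + 1)))
           sums (pi/4 * cos (x/2) - 1/4 * (pi - x) - (\<Sum>j=1..m. Gl (2*j+1) x / 2 ^ (2*j+1)))"
proof (induction m)
  case 0
  note B = base_complex[OF x0 x2]
  have c0: "(\<lambda>k. cos (real (Suc k) * x) / ((2 * real (Suc k) - 1) * (2 * real (Suc k)) ^ (2*0) * (2 * real (Suc k) + 1)))
           sums (1/2 - pi/4 * sin (x/2) - (\<Sum>j=1..0. Gl (2*j) x / 2 ^ (2*j)))"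
    using sums_Re[OF B(1)] by simp
  have s0: "(\<lambda>k. sin (real (Suc k) * x) / ((2 * real (Suc k) - 1) * (2 * real (Suc k)) ^ (2*0) * (2 * real (Suc k) + 1)))
           sums (- 1/2 * sin (x/2) * ln (tan (x/4)) - (\<Sum>j=1..0. Cl (2*j) x / 2 ^ (2*j)))"
    using sums_Im[OF B(1)] by simp
  have c1: "(\<lambda>k. cos (real (Suc k) * x) / ((2 * real (Suc k) - 1) * (2 * real (Suc k)) ^ (2*0+1) * (2 * real (Suc k) + 1)))
           sums (- 1/2 - 1/2 * cos (x/2) * ln (tan (x/4)) + 1/2 * ln (2 * sin (x/2)) - (\<Sum>j=1..0. Cl (2*j+1) x / 2 ^ (2*j+1)))"
    using sums_Re[OF B(2)] by simp
  have s1: "(\<lambda>k. sin (real (Suc k) * x) / ((2 * real (Suc k) - 1) * (2 * real (Suc k)) ^ (2*0+1) * (2 * real (Suc k) + 1)))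
           sums (pi/4 * cos (x/2) - 1/4 * (pi - x) - (\<Sum>j=1..0. Gl (2*j+1) x / 2 ^ (2*j+1)))"
    using sums_Im[OF B(2)] by simp
  show ?case using c0 s0 c1 s1 by blast
next
  case (Suc m)
  have bc: "\<And>y::real. \<bar>cos y\<bar> \<le> 1" by simp
  have bs: "\<And>y::real. \<bar>sin y\<bar> \<le> 1" by simp
  have q1: "2 * Suc m = 2 * m + 2" by simp
  have q2: "2 * Suc m + 1 = (2 * m + 1) + 2" by simp
  have sum1: "(\<Sum>j=1..Suc m. F j) = (\<Sum>j=1..m. F j) + F (Suc m)" for F :: "nat \<Rightarrow> real"
    by simp
  have Gle: "Gl (2 * Suc m) x = (\<Sum>k. cos (real (Suc k) * x) / real (Suc k) ^ (2 * Suc m))"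
    unfolding Gl_def by simp
  have Cle: "Cl (2 * Suc m) x = (\<Sum>k. sin (real (Suc k) * x) / real (Suc k) ^ (2 * Suc m))"
    unfolding Cl_def by simp
  have Clo: "Cl (2 * Suc m + 1) x = (\<Sum>k. cos (real (Suc k) * x) / real (Suc k) ^ (2 * Suc m + 1))"
    unfolding Cl_def by simp
  have Glo: "Gl (2 * Suc m + 1) x = (\<Sum>k. sin (real (Suc k) * x) / real (Suc k) ^ (2 * Suc m + 1))"
    unfolding Gl_def by simp
  from Suc.IH have I1: "(\<lambda>k. cos (real (Suc k) * x) / ((2 * real (Suc k) - 1) * (2 * real (Suc k)) ^ (2*m) * (2 * real (Suc k) + 1)))
           sums (1/2 - pi/4 * sin (x/2) - (\<Sum>j=1..m. Gl (2*j) x / 2 ^ (2*j)))"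
    and I2: "(\<lambda>k. sin (real (Suc k) * x) / ((2 * real (Suc k) - 1) * (2 * real (Suc k)) ^ (2*m) * (2 * real (Suc k) + 1)))
           sums (- 1/2 * sin (x/2) * ln (tan (x/4)) - (\<Sum>j=1..m. Cl (2*j) x / 2 ^ (2*j)))"
    and I3: "(\<lambda>k. cos (real (Suc k) * x) / ((2 * real (Suc k) - 1) * (2 * real (Suc k)) ^ (2*m+1) * (2 * real (Suc k) + 1)))
           sums (- 1/2 - 1/2 * cos (x/2) * ln (tan (x/4)) + 1/2 * ln (2 * sin (x/2)) - (\<Sum>j=1..m. Cl (2*j+1) x / 2 ^ (2*j+1)))"
    and I4: "(\<lambda>k. sin (real (Suc k) * x) / ((2 * real (Suc k) - 1) * (2 * real (Suc k)) ^ (2*m+1) * (2 * real (Suc k) + 1)))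
           sums (pi/4 * cos (x/2) - 1/4 * (pi - x) - (\<Sum>j=1..m. Gl (2*j+1) x / 2 ^ (2*j+1)))"
    by blast+
  show ?case unfolding sum1
    using step'[OF bc I1 q1 Gle] step'[OF bs I2 q1 Cle] step'[OF bc I3 q2 Clo] step'[OF bs I4 q2 Glo]
    by blast
qed

theorem corollary6:
  fixes p :: nat and x :: real
  assumes "0 < x" and "x < 2 * pi"
  shows "((\<lambda>k. cos (real (Suc k) * x) /
            ((2 * real (Suc k) - 1) * (2 * real (Suc k)) ^ p * (2 * real (Suc k) + 1)))
         sums
         (if even p
          then 1/2 - pi/4 * sin (x/2) - (\<Sum>j=1..p div 2. Gl (2*j) x / 2 ^ (2*j))
          else - 1/2 - 1/2 * cos (x/2) * ln (tan (x/4)) + 1/2 * ln (2 * sin (x/2))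
               - (\<Sum>j=1..(p - 1) div 2. Cl (2*j+1) x / 2 ^ (2*j+1)))
       \<and>
         (\<lambda>k. sin (real (Suc k) * x) /
            ((2 * real (Suc k) - 1) * (2 * real (Suc k)) ^ p * (2 * real (Suc k) + 1)))
         sums
         (if even p
          then - 1/2 * sin (x/2) * ln (tan (x/4)) - (\<Sum>j=1..p div 2. Cl (2*j) x / 2 ^ (2*j))
          else pi/4 * cos (x/2) - 1/4 * (pi - x)
               - (\<Sum>j=1..(p - 1) div 2. Gl (2*j+1) x / 2 ^ (2*j+1))))"
proof (cases "even p")
  case True
  then obtain m where p: "p = 2 * m" by (auto elim: evenE)
  have d: "p div 2 = m" using p by simp
  show ?thesis using main[OF assms, of m] True unfolding d by (simp add: p)
next
  case False
  then obtain m where p: "p = 2 * m + 1" by (auto elim: oddE)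
  have d: "(p - 1) div 2 = m" using p by simp
  show ?thesis using main[OF assms, of m] False unfolding d by (simp add: p)
qed
end
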